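(* Let $\pi:\mathbb{F}\twoheadrightarrow\Gamma$ be an epimorphism from a free group on a finite basis $X$ which is not an isomorphism, let $S=\pi(X)$, and suppose $\Gamma$ is sofic and stable. Then there exists $C>0$ such that for all $l\ge C$, $$\mathcal{D}_\Gamma^S\big(2F_\Gamma^\pi(10l)\big)!\ge\mathcal{R}_\Gamma^S(l).$$
   Context: For finite $\Omega$, $d_\Omega(\sigma,\tau)=|\{\omega:\sigma(\omega)\ne\tau(\omega)\}|/|\Omega|$. A pair $(\delta,E)$, $\delta\in(0,1]$, $E\subseteq\ker\pi$ finite, is valid for $\epsilon>0$ if for every finite $\Omega$ and homomorphism $\rho:\mathbb{F}\to\mathrm{Sym}(\Omega)$ with $d_\Omega(\rho(r),\mathrm{id})<\delta$ for all $r\in E$ there is a homomorphism $\phi:\Gamma\to\mathrm{Sym}(\Omega)$ with $d_\Omega(\rho(x),\phi(\pi(x)))<\epsilon$ for all $x\in X$; $\Gamma$ is stable if valid pairs exist for all $\epsilon$. $F_\Gamma^\pi(x)=\inf\{\|E\|/\delta:(\delta,E)\text{ valid for }1/x\}$, $\|E\|=\sum_{r\in E}|r|$ (word length in $X$). For finite $A\subseteq\Gamma$ and $\epsilon>0$, an $(A,\epsilon)$-almost representation is a map $\phi:A\to\mathrm{Sym}(\Omega)$, $\Omega$ finite, such that for $g,h\in A$: if $gh\in A$ then $d_\Omega(\phi(gh),\phi(g)\phi(h))<\epsilon$; if $g\ne e$ then $d_\Omega(\phi(g),\mathrm{id})>1-\epsilon$; if $e\in A$ then $\phi(e)=\mathrm{id}$.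 $\Gamma$ is sofic if these exist for all finite $A$ and $\epsilon>0$. $B_S(l)$ is the ball of radius $l$ in the word metric of $S$. The sofic profile $\mathcal{D}_\Gamma^S(l)$ is the minimal $|\Omega|$ for which a $(B_S(l),1/l)$-almost representation into $\mathrm{Sym}(\Omega)$ exists; for real $t\ge1$, $\mathcal{D}_\Gamma^S(t)=\mathcal{D}_\Gamma^S(\lfloor t\rfloor)$. $\mathcal{R}_\Gamma^S(l)$ is the minimal order of a finite group $\Delta$ with a homomorphism $\Gamma\to\Delta$ injective on $B_S(l)$. *)

theory Defs
  imports Complex_Main "HOL-Algebra.Bij" "HOL-Library.Extended_Nat"
begin

(* Letters of the free group on basis X: (x, True) stands for x, (x, False) for x^{-1}.
   Elements of the free group F(X) are the reduced words over X. *)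
type_synonym 'x letter = "'x \<times> bool"

definition words_on :: "'x set \<Rightarrow> 'x letter list set" where
  "words_on X = {w. \<forall>a \<in> set w. fst a \<in> X}"

fun reduced :: "'x letter list \<Rightarrow> bool" where
  "reduced [] = True"
| "reduced [a] = True"
| "reduced (a # b # w) = ((\<not> (fst a = fst b \<and> snd a \<noteq> snd b)) \<and> reduced (b # w))"

definition free_elems :: "'x set \<Rightarrow> 'x letter list set" where
  "free_elems X = {w \<in> words_on X. reduced w}"

definition eval_word :: "('h, 'm) monoid_scheme \<Rightarrow> ('x \<Rightarrow> 'h) \<Rightarrow> 'x letter list \<Rightarrow> 'h" where
  "eval_word H f w =
     foldr (\<lambda>a acc. (if snd a then f (fst a) else inv\<^bsub>H\<^esub> (f (fst a))) \<otimes>\<^bsub>H\<^esub> acc) w \<one>\<^bsub>H\<^esub>"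

definition dOm :: "nat set \<Rightarrow> (nat \<Rightarrow> nat) \<Rightarrow> (nat \<Rightarrow> nat) \<Rightarrow> real" where
  "dOm \<Omega> \<sigma> \<tau> = real (card {\<omega> \<in> \<Omega>. \<sigma> \<omega> \<noteq> \<tau> \<omega>}) / real (card \<Omega>)"

definition kerpi :: "('g, 'm) monoid_scheme \<Rightarrow> 'x set \<Rightarrow> ('x \<Rightarrow> 'g) \<Rightarrow> 'x letter list set" where
  "kerpi G X s = {w \<in> free_elems X. eval_word G s w = \<one>\<^bsub>G\<^esub>}"

(* homomorphisms rho : F(X) -> Sym(Omega) correspond to assignments r : X -> Sym(Omega) *)
definition valid_pair :: "('g, 'm) monoid_scheme \<Rightarrow> 'x set \<Rightarrow> ('x \<Rightarrow> 'g) \<Rightarrow> real \<Rightarrow> real \<Rightarrow> 'x letter list set \<Rightarrow> bool" where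
  "valid_pair G X s \<epsilon> \<delta> E \<longleftrightarrow>
     0 < \<delta> \<and> \<delta> \<le> 1 \<and> finite E \<and> E \<subseteq> kerpi G X s \<and>
     (\<forall>(\<Omega>::nat set) r. finite \<Omega> \<longrightarrow> r ` X \<subseteq> carrier (BijGroup \<Omega>) \<longrightarrow>
        (\<forall>w \<in> E. dOm \<Omega> (eval_word (BijGroup \<Omega>) r w) \<one>\<^bsub>BijGroup \<Omega>\<^esub> < \<delta>) \<longrightarrow>
        (\<exists>\<phi> \<in> hom G (BijGroup \<Omega>). \<forall>x \<in> X. dOm \<Omega> (r x) (\<phi> (s x)) < \<epsilon>))"

definition stable :: "('g, 'm) monoid_scheme \<Rightarrow> 'x set \<Rightarrow> ('x \<Rightarrow> 'g) \<Rightarrow> bool" where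
  "stable G X s \<longleftrightarrow> (\<forall>\<epsilon>>0. \<exists>\<delta> E. valid_pair G X s \<epsilon> \<delta> E)"

definition norm_rel :: "'x letter list set \<Rightarrow> nat" where
  "norm_rel E = (\<Sum>r\<in>E. length r)"

definition stab_fun :: "('g, 'm) monoid_scheme \<Rightarrow> 'x set \<Rightarrow> ('x \<Rightarrow> 'g) \<Rightarrow> real \<Rightarrow> real" where
  "stab_fun G X s x = Inf {real (norm_rel E) / \<delta> | \<delta> E. valid_pair G X s (1 / x) \<delta> E}"

definition almost_rep :: "('g, 'm) monoid_scheme \<Rightarrow> 'g set \<Rightarrow> real \<Rightarrow> nat set \<Rightarrow> ('g \<Rightarrow> nat \<Rightarrow> nat) \<Rightarrow> bool" where
  "almost_rep G A \<epsilon> \<Omega> \<phi> \<longleftrightarrow> finite \<Omega> \<and> \<phi> ` A \<subseteq> carrier (BijGroup \<Omega>) \<and>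
     (\<forall>g\<in>A. \<forall>h\<in>A. g \<otimes>\<^bsub>G\<^esub> h \<in> A \<longrightarrow>
        dOm \<Omega> (\<phi> (g \<otimes>\<^bsub>G\<^esub> h)) (\<phi> g \<otimes>\<^bsub>BijGroup \<Omega>\<^esub> \<phi> h) < \<epsilon>) \<and>
     (\<forall>g\<in>A. g \<noteq> \<one>\<^bsub>G\<^esub> \<longrightarrow> dOm \<Omega> (\<phi> g) \<one>\<^bsub>BijGroup \<Omega>\<^esub> > 1 - \<epsilon>) \<and>
     (\<one>\<^bsub>G\<^esub> \<in> A \<longrightarrow> \<phi> \<one>\<^bsub>G\<^esub> = \<one>\<^bsub>BijGroup \<Omega>\<^esub>)"

definition sofic :: "('g, 'm) monoid_scheme \<Rightarrow> bool" where
  "sofic G \<longleftrightarrow> (\<forall>A \<epsilon>. finite A \<longrightarrow> A \<subseteq> carrier G \<longrightarrow> \<epsilon> > 0 \<longrightarrow>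
      (\<exists>(\<Omega>::nat set) \<phi>. almost_rep G A \<epsilon> \<Omega> \<phi>))"

definition ballS :: "('g, 'm) monoid_scheme \<Rightarrow> 'x set \<Rightarrow> ('x \<Rightarrow> 'g) \<Rightarrow> nat \<Rightarrow> 'g set" where
  "ballS G X s l = {eval_word G s w | w. w \<in> words_on X \<and> length w \<le> l}"

definition sofic_profile :: "('g, 'm) monoid_scheme \<Rightarrow> 'x set \<Rightarrow> ('x \<Rightarrow> 'g) \<Rightarrow> nat \<Rightarrow> nat" where
  "sofic_profile G X s l = (LEAST n. \<exists>(\<Omega>::nat set) \<phi>. card \<Omega> = n \<and>
       almost_rep G (ballS G X s l) (1 / real l) \<Omega> \<phi>)"

definition sofic_profile_real :: "('g, 'm) monoid_scheme \<Rightarrow> 'x set \<Rightarrow> ('x \<Rightarrow> 'g) \<Rightarrow> real \<Rightarrow> nat" where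
  "sofic_profile_real G X s t = sofic_profile G X s (nat \<lfloor>t\<rfloor>)"

(* R(l); infinity if no such finite quotient exists. Finite groups are taken on
   carriers of naturals (every finite group is isomorphic to one). *)
definition rf_profile :: "('g, 'm) monoid_scheme \<Rightarrow> 'x set \<Rightarrow> ('x \<Rightarrow> 'g) \<Rightarrow> nat \<Rightarrow> enat" where
  "rf_profile G X s l = Inf {enat (card (carrier \<Delta>)) | \<Delta> :: nat monoid.
       group \<Delta> \<and> finite (carrier \<Delta>) \<and> (\<exists>h \<in> hom G \<Delta>. inj_on h (ballS G X s l))}"

end

theory Submission
  imports Defs "HOL-Combinatorics.Permutations"
begin


lemma eval_word_Nil[simp]: "eval_word H f [] = \<one>\<^bsub>H\<^esub>"
  by (simp add: eval_word_def)

lemma eval_word_Cons[simp]: "eval_word H f (a # w) =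
   (if snd a then f (fst a) else inv\<^bsub>H\<^esub> (f (fst a))) \<otimes>\<^bsub>H\<^esub> eval_word H f w"
  by (simp add: eval_word_def)

lemma words_on_Cons[simp]: "(a # w) \<in> words_on X \<longleftrightarrow> fst a \<in> X \<and> w \<in> words_on X"
  by (auto simp: words_on_def)

lemma words_on_Nil[simp]: "[] \<in> words_on X"
  by (auto simp: words_on_def)

lemma words_on_append[simp]: "(u @ v) \<in> words_on X \<longleftrightarrow> u \<in> words_on X \<and> v \<in> words_on X"
  by (auto simp: words_on_def)

lemma letter_closed:
  assumes "group H" "f ` X \<subseteq> carrier H" "fst a \<in> X"
  shows "(if snd a then f (fst a) else inv\<^bsub>H\<^esub> (f (fst a))) \<in> carrier H"
  using assms by (auto intro: group.inv_closed)

lemma eval_word_closed: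
  assumes "group H" "f ` X \<subseteq> carrier H" "w \<in> words_on X"
  shows "eval_word H f w \<in> carrier H"
  using assms(3)
proof (induction w)
  case Nil then show ?case using assms by (simp add: group.is_monoid monoid.one_closed)
next
  case (Cons a w)
  then show ?case using letter_closed[OF assms(1,2), of a] assms(1)
    by (simp del: if_image_distrib add: group.is_monoid monoid.m_closed)
qed

lemma eval_word_append:
  assumes "group H" "f ` X \<subseteq> carrier H" "u \<in> words_on X" "v \<in> words_on X"
  shows "eval_word H f (u @ v) = eval_word H f u \<otimes>\<^bsub>H\<^esub> eval_word H f v"
  using assms(3)
proof (induction u)
  case Nil then show ?case using assms eval_word_closed[OF assms(1,2,4)]
    by (simp add: group.is_monoid monoid.l_one)
next
  case (Cons a u)
  then show ?case using letter_closed[OF assms(1,2), of a] assms eval_word_closed[OF assms(1,2)]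
    by (simp add: group.is_monoid monoid.m_assoc del: if_image_distrib)
qed

definition invw :: "'x letter list \<Rightarrow> 'x letter list" where
  "invw u = rev (map (\<lambda>a. (fst a, \<not> snd a)) u)"

lemma invw_Cons: "invw (a # u) = invw u @ [(fst a, \<not> snd a)]"
  by (simp add: invw_def)

lemma invw_words: "u \<in> words_on X \<Longrightarrow> invw u \<in> words_on X"
  by (auto simp: invw_def words_on_def)

lemma length_invw[simp]: "length (invw u) = length u"
  by (simp add: invw_def)

lemma eval_invw:
  assumes "group H" "f ` X \<subseteq> carrier H" "u \<in> words_on X"
  shows "eval_word H f (invw u) = inv\<^bsub>H\<^esub> (eval_word H f u)"
  using assms(3)
proof (induction u)
  case Nil then show ?case using assms by (simp add: invw_def group.is_monoid monoid.inv_one)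
next
  case (Cons a u)
  have fa: "f (fst a) \<in> carrier H" using Cons assms by auto
  have eu: "eval_word H f u \<in> carrier H" using Cons eval_word_closed[OF assms(1,2)] by auto
  have "eval_word H f (invw (a # u)) = eval_word H f (invw u) \<otimes>\<^bsub>H\<^esub> eval_word H f [(fst a, \<not> snd a)]"
    unfolding invw_Cons using Cons assms by (intro eval_word_append) (auto intro: invw_words)
  also have "\<dots> = inv\<^bsub>H\<^esub> (eval_word H f u) \<otimes>\<^bsub>H\<^esub> inv\<^bsub>H\<^esub> (if snd a then f (fst a) else inv\<^bsub>H\<^esub> (f (fst a)))"
    using Cons fa assms(1) by (auto simp: group.inv_inv group.is_monoid monoid.r_one group.inv_closed)
  also have "\<dots> = inv\<^bsub>H\<^esub> ((if snd a then f (fst a) else inv\<^bsub>H\<^esub> (f (fst a))) \<otimes>\<^bsub>H\<^esub> eval_word H f u)"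
    using fa eu assms(1) letter_closed[OF assms(1,2), of a] Cons
    by (simp add: group.inv_mult_group del: if_image_distrib)
  finally show ?case by simp
qed

lemma eval_word_hom:
  assumes "group G" "group H" "h \<in> hom G H" "f ` X \<subseteq> carrier G" "w \<in> words_on X"
  shows "h (eval_word G f w) = eval_word H (h \<circ> f) w"
  using assms(5)
proof (induction w)
  case Nil then show ?case using assms hom_one by simp
next
  case (Cons a w)
  have gh: "group_hom G H h" using assms by (simp add: group_hom_def group_hom_axioms_def)
  have fa: "f (fst a) \<in> carrier G" using Cons assms by auto
  show ?case using Cons fa assms eval_word_closed[OF assms(1,4)] letter_closed[OF assms(1,4), of a]
    by (simp add: hom_mult group_hom.hom_inv[OF gh] del: if_image_distrib) 
qed

lemma eval_word_cong:
  "(\<And>a. a \<in> set w \<Longrightarrow> f (fst a) = g (fst a)) \<Longrightarrow> eval_word H f w = eval_word H g w"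
  by (induction w) auto



lemma dOm_nonneg: "0 \<le> dOm \<Omega> a b"
  by (simp add: dOm_def)

lemma dOm_sym: "dOm \<Omega> a b = dOm \<Omega> b a"
proof -
  have "{\<omega> \<in> \<Omega>. a \<omega> \<noteq> b \<omega>} = {\<omega> \<in> \<Omega>. b \<omega> \<noteq> a \<omega>}" by auto
  then show ?thesis unfolding dOm_def by simp
qed

lemma dOm_self[simp]: "dOm \<Omega> a a = 0"
  by (simp add: dOm_def)

lemma dOm_triangle:
  assumes "finite \<Omega>"
  shows "dOm \<Omega> a c \<le> dOm \<Omega> a b + dOm \<Omega> b c"
proof -
  have "{\<omega> \<in> \<Omega>. a \<omega> \<noteq> c \<omega>} \<subseteq> {\<omega> \<in> \<Omega>. a \<omega> \<noteq> b \<omega>} \<union> {\<omega> \<in> \<Omega>. b \<omega> \<noteq> c \<omega>}" by auto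
  then have "card {\<omega> \<in> \<Omega>. a \<omega> \<noteq> c \<omega>} \<le> card ({\<omega> \<in> \<Omega>. a \<omega> \<noteq> b \<omega>} \<union> {\<omega> \<in> \<Omega>. b \<omega> \<noteq> c \<omega>})"
    using assms by (intro card_mono) auto
  also have "\<dots> \<le> card {\<omega> \<in> \<Omega>. a \<omega> \<noteq> b \<omega>} + card {\<omega> \<in> \<Omega>. b \<omega> \<noteq> c \<omega>}"
    by (rule card_Un_le)
  finally have "real (card {\<omega> \<in> \<Omega>. a \<omega> \<noteq> c \<omega>}) \<le> real (card {\<omega> \<in> \<Omega>. a \<omega> \<noteq> b \<omega>}) + real (card {\<omega> \<in> \<Omega>. b \<omega> \<noteq> c \<omega>})"
    by linarith
  then show ?thesis unfolding dOm_def
    by (simp add: add_divide_distrib[symmetric] divide_right_mono)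
qed

lemma BijGroup_mult: "a \<in> Bij \<Omega> \<Longrightarrow> b \<in> Bij \<Omega> \<Longrightarrow> a \<otimes>\<^bsub>BijGroup \<Omega>\<^esub> b = compose \<Omega> a b"
  by (simp add: BijGroup_def)

lemma BijGroup_carrier: "carrier (BijGroup \<Omega>) = Bij \<Omega>"
  by (simp add: BijGroup_def)

lemma BijGroup_one: "\<one>\<^bsub>BijGroup \<Omega>\<^esub> = (\<lambda>x\<in>\<Omega>. x)"
  by (simp add: BijGroup_def)

lemma Bij_mem: "a \<in> Bij \<Omega> \<Longrightarrow> x \<in> \<Omega> \<Longrightarrow> a x \<in> \<Omega>"
  using Bij_imp_funcset by blast

lemma dOm_left:
  assumes "a \<in> Bij \<Omega>" "b \<in> Bij \<Omega>" "c \<in> Bij \<Omega>"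
  shows "dOm \<Omega> (c \<otimes>\<^bsub>BijGroup \<Omega>\<^esub> a) (c \<otimes>\<^bsub>BijGroup \<Omega>\<^esub> b) = dOm \<Omega> a b"
proof -
  have inj: "inj_on c \<Omega>" using assms(3) by (simp add: Bij_def bij_betw_def)
  have "{\<omega> \<in> \<Omega>. compose \<Omega> c a \<omega> \<noteq> compose \<Omega> c b \<omega>} = {\<omega> \<in> \<Omega>. a \<omega> \<noteq> b \<omega>}"
    using inj Bij_mem[OF assms(1)] Bij_mem[OF assms(2)] by (auto simp: compose_def inj_on_def)
  then show ?thesis using assms by (simp add: BijGroup_mult dOm_def)
qed

lemma dOm_right:
  assumes "a \<in> Bij \<Omega>" "b \<in> Bij \<Omega>" "c \<in> Bij \<Omega>"
  shows "dOm \<Omega> (a \<otimes>\<^bsub>BijGroup \<Omega>\<^esub> c) (b \<otimes>\<^bsub>BijGroup \<Omega>\<^esub> c) = dOm \<Omega> a b"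
proof -
  have bc: "bij_betw c \<Omega> \<Omega>" using assms(3) by (simp add: Bij_def)
  have "{\<omega> \<in> \<Omega>. compose \<Omega> a c \<omega> \<noteq> compose \<Omega> b c \<omega>} = {\<omega> \<in> \<Omega>. a (c \<omega>) \<noteq> b (c \<omega>)}"
    by (auto simp: compose_def)
  moreover have "bij_betw c {\<omega> \<in> \<Omega>. a (c \<omega>) \<noteq> b (c \<omega>)} {\<omega> \<in> \<Omega>. a \<omega> \<noteq> b \<omega>}"
  proof -
    have "inj_on c {\<omega> \<in> \<Omega>. a (c \<omega>) \<noteq> b (c \<omega>)}"
      by (rule inj_on_subset[OF bij_betw_imp_inj_on[OF bc]]) blast
    moreover have "c ` {\<omega> \<in> \<Omega>. a (c \<omega>) \<noteq> b (c \<omega>)} = {\<omega> \<in> \<Omega>. a \<omega> \<noteq> b \<omega>}"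
    proof
      show "c ` {\<omega> \<in> \<Omega>. a (c \<omega>) \<noteq> b (c \<omega>)} \<subseteq> {\<omega> \<in> \<Omega>. a \<omega> \<noteq> b \<omega>}"
        using bij_betw_apply[OF bc] by blast
    next
      show "{\<omega> \<in> \<Omega>. a \<omega> \<noteq> b \<omega>} \<subseteq> c ` {\<omega> \<in> \<Omega>. a (c \<omega>) \<noteq> b (c \<omega>)}"
      proof
        fix \<omega> assume h: "\<omega> \<in> {\<omega> \<in> \<Omega>. a \<omega> \<noteq> b \<omega>}"
        then have "\<omega> \<in> c ` \<Omega>" using bc unfolding bij_betw_def by simp
        then obtain \<nu> where nu: "\<nu> \<in> \<Omega>" "\<omega> = c \<nu>" by (rule imageE) simp
        have "\<nu> \<in> {\<omega> \<in> \<Omega>. a (c \<omega>) \<noteq> b (c \<omega>)}" using nu h by simp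
        then show "\<omega> \<in> c ` {\<omega> \<in> \<Omega>. a (c \<omega>) \<noteq> b (c \<omega>)}" using nu(2) by (rule rev_image_eqI)
      qed
    qed
    ultimately show ?thesis by (simp add: bij_betw_def)
  qed
  ultimately have "card {\<omega> \<in> \<Omega>. compose \<Omega> a c \<omega> \<noteq> compose \<Omega> b c \<omega>} = card {\<omega> \<in> \<Omega>. a \<omega> \<noteq> b \<omega>}"
    by (simp add: bij_betw_same_card)
  then show ?thesis using assms by (simp add: BijGroup_mult dOm_def)
qed

lemma dOm_inv:
  assumes "a \<in> Bij \<Omega>" "b \<in> Bij \<Omega>"
  shows "dOm \<Omega> (inv\<^bsub>BijGroup \<Omega>\<^esub> a) (inv\<^bsub>BijGroup \<Omega>\<^esub> b) = dOm \<Omega> a b"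
proof -
  interpret B: group "BijGroup \<Omega>" by (rule group_BijGroup)
  have c: "a \<in> carrier (BijGroup \<Omega>)" "b \<in> carrier (BijGroup \<Omega>)" using assms by (auto simp: BijGroup_carrier)
  have "dOm \<Omega> (inv\<^bsub>BijGroup \<Omega>\<^esub> a) (inv\<^bsub>BijGroup \<Omega>\<^esub> b)
      = dOm \<Omega> (a \<otimes>\<^bsub>BijGroup \<Omega>\<^esub> inv\<^bsub>BijGroup \<Omega>\<^esub> a) (a \<otimes>\<^bsub>BijGroup \<Omega>\<^esub> inv\<^bsub>BijGroup \<Omega>\<^esub> b)"
    using c by (subst dOm_left) (auto simp: BijGroup_carrier[symmetric])
  also have "\<dots> = dOm \<Omega> (\<one>\<^bsub>BijGroup \<Omega>\<^esub> \<otimes>\<^bsub>BijGroup \<Omega>\<^esub> b) ((a \<otimes>\<^bsub>BijGroup \<Omega>\<^esub> inv\<^bsub>BijGroup \<Omega>\<^esub> b) \<otimes>\<^bsub>BijGroup \<Omega>\<^esub> b)"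
    using c by (subst dOm_right) (auto simp: BijGroup_carrier[symmetric])
  also have "\<dots> = dOm \<Omega> b a" using c by (simp add: B.m_assoc)
  finally show ?thesis by (simp add: dOm_sym)
qed

lemma dOm_zero_eq:
  assumes "finite \<Omega>" "a \<in> Bij \<Omega>" "b \<in> Bij \<Omega>" "dOm \<Omega> a b < 1 / real (card \<Omega>)"
  shows "a = b"
proof -
  have "card \<Omega> \<noteq> 0"
  proof
    assume "card \<Omega> = 0" then show False using assms(4) by (simp add: dOm_def)
  qed
  then have cp: "real (card \<Omega>) > 0" by simp
  have "real (card {\<omega> \<in> \<Omega>. a \<omega> \<noteq> b \<omega>}) / real (card \<Omega>) < 1 / real (card \<Omega>)"
    using assms(4) by (simp add: dOm_def)
  then have "real (card {\<omega> \<in> \<Omega>. a \<omega> \<noteq> b \<omega>}) < 1"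
    using cp divide_less_cancel by blast
  then have c0: "card {\<omega> \<in> \<Omega>. a \<omega> \<noteq> b \<omega>} = 0" by linarith
  have fin: "finite {\<omega> \<in> \<Omega>. a \<omega> \<noteq> b \<omega>}" using assms(1) by simp
  have e: "{\<omega> \<in> \<Omega>. a \<omega> \<noteq> b \<omega>} = {}" using card_0_eq[OF fin] c0 by blast
  have pt: "a x = b x" if "x \<in> \<Omega>" for x
  proof (rule ccontr)
    assume "a x \<noteq> b x"
    then have "x \<in> {\<omega> \<in> \<Omega>. a \<omega> \<noteq> b \<omega>}" using that by blast
    then show False using e by blast
  qed
  show ?thesis
    by (rule extensionalityI[OF Bij_imp_extensional[OF assms(2)] Bij_imp_extensional[OF assms(3)] pt])
qed



lemma reduced_nth:
  "reduced w \<Longrightarrow> Suc i < length w \<Longrightarrow> \<not> (fst (w!i) = fst (w!Suc i) \<and> snd (w!i) \<noteq> snd (w!Suc i))"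
proof (induction w arbitrary: i rule: reduced.induct)
  case (3 a b w)
  then show ?case by (cases i) auto
qed auto

lemma extend_perm:
  assumes "finite A" "D \<subseteq> A" "f ` D \<subseteq> A" "inj_on f D"
  shows "\<exists>\<sigma>. bij_betw \<sigma> A A \<and> (\<forall>p\<in>D. \<sigma> p = f p) \<and> (\<forall>p. p \<notin> A \<longrightarrow> \<sigma> p = p)"
proof -
  have "card (A - D) = card (A - f ` D)"
    using assms by (simp add: card_Diff_subset finite_subset card_image)
  then obtain g where g: "bij_betw g (A - D) (A - f ` D)"
    using finite_same_card_bij assms(1) by (meson finite_Diff)
  have bf: "bij_betw f D (f ` D)" using assms(4) by (simp add: bij_betw_imageI)
  have "bij_betw (\<lambda>x. if x \<in> D then f x else g x) (D \<union> (A - D)) (f ` D \<union> (A - f ` D))"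
    by (rule bij_betw_disjoint_Un[OF bf g]) auto
  moreover have "D \<union> (A - D) = A" "f ` D \<union> (A - f ` D) = A" using assms by auto
  ultimately have b: "bij_betw (\<lambda>x. if x \<in> D then f x else g x) A A" by simp
  define \<sigma> where "\<sigma> = (\<lambda>x. if x \<in> D then f x else if x \<in> A then g x else x)"
  have bs: "bij_betw \<sigma> A A"
    using b by (rule bij_betw_cong[THEN iffD1, rotated]) (auto simp: \<sigma>_def)
  have "\<forall>p\<in>D. \<sigma> p = f p" "\<forall>p. p \<notin> A \<longrightarrow> \<sigma> p = p" using assms(2) by (auto simp: \<sigma>_def)
  then show ?thesis using bs by blast
qed

lemma bij_extend_id:
  assumes "bij_betw \<sigma> A A" "\<forall>p. p \<notin> A \<longrightarrow> \<sigma> p = p" "A \<subseteq> \<Omega>"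
  shows "bij_betw \<sigma> \<Omega> \<Omega>"
proof -
  have "bij_betw (\<lambda>x. if x \<in> A then \<sigma> x else id x) (A \<union> (\<Omega> - A)) (A \<union> (\<Omega> - A))"
    by (rule bij_betw_disjoint_Un[OF assms(1) bij_betw_id[of "\<Omega> - A"]]) auto
  moreover have "A \<union> (\<Omega> - A) = \<Omega>" using assms by auto
  ultimately have b: "bij_betw (\<lambda>x. if x \<in> A then \<sigma> x else id x) \<Omega> \<Omega>" by simp
  have e: "\<And>x. x \<in> \<Omega> \<Longrightarrow> (if x \<in> A then \<sigma> x else id x) = \<sigma> x" using assms(2) by auto
  show ?thesis using bij_betw_cong[of \<Omega> _ \<sigma> \<Omega>, OF e] b by simp
qed

lemma path_perm:
  fixes w :: "'x letter list"
  assumes red: "reduced w" and ne: "w \<noteq> []" and lt: "length w < N"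
  shows "\<exists>\<rho>. (\<forall>x. \<rho> x \<in> Bij {0..<N}) \<and>
     eval_word (BijGroup {0..<N}) \<rho> w \<noteq> \<one>\<^bsub>BijGroup {0..<N}\<^esub> \<and>
     (\<forall>r. dOm {0..<N} (eval_word (BijGroup {0..<N}) \<rho> r) \<one>\<^bsub>BijGroup {0..<N}\<^esub> \<le> real (length w + 1) / real N)"
proof -
  define L where "L = length w"
  define \<Omega> where "\<Omega> = {0..<N}"
  define A where "A = {0..L}"
  define T where "T x p \<longleftrightarrow> 1 \<le> p \<and> p \<le> L \<and> w!(p-1) = (x,True)" for x p
  define Fx where "Fx x p \<longleftrightarrow> p < L \<and> w!p = (x,False)" for x p
  define D where "D x = {p. T x p \<or> Fx x p}" for x
  define f where "f x p = (if T x p then p - 1 else p + 1)" for x p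
  have adj: "\<not> (T x k \<and> Fx x k)" for x k
  proof
    assume h: "T x k \<and> Fx x k"
    then have "Suc (k-1) < length w" "k - 1 + 1 = k" by (auto simp: T_def Fx_def L_def)
    then show False using reduced_nth[OF red, of "k-1"] h by (auto simp: T_def Fx_def)
  qed
  have "\<forall>x. \<exists>\<sigma>. bij_betw \<sigma> A A \<and> (\<forall>p\<in>D x. \<sigma> p = f x p) \<and> (\<forall>p. p \<notin> A \<longrightarrow> \<sigma> p = p)"
  proof
    fix x show "\<exists>\<sigma>. bij_betw \<sigma> A A \<and> (\<forall>p\<in>D x. \<sigma> p = f x p) \<and> (\<forall>p. p \<notin> A \<longrightarrow> \<sigma> p = p)"
  proof (rule extend_perm)
    show "finite A" by (simp add: A_def)
    show "D x \<subseteq> A" by (auto simp: D_def A_def T_def Fx_def)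
    show "f x ` D x \<subseteq> A" by (auto simp: D_def A_def T_def Fx_def f_def)
    show "inj_on (f x) (D x)"
    proof (rule inj_onI)
      fix p q assume p: "p \<in> D x" and q: "q \<in> D x" and e: "f x p = f x q"
      show "p = q"
      proof (cases "T x p")
        case True note tp = this
        show ?thesis
        proof (cases "T x q")
          case True then show ?thesis using tp e by (auto simp: f_def T_def)
        next
          case False
          then have fq: "Fx x q" using q by (auto simp: D_def)
          have "p = q + 2" using e tp False by (auto simp: f_def T_def)
          then have "Suc q < length w" "w!Suc q = (x, True)" using tp by (auto simp: T_def L_def)
          then show ?thesis using reduced_nth[OF red, of q] fq by (auto simp: Fx_def)
        qed
      next
        case False note tp = this
        then have fp: "Fx x p" using p by (auto simp: D_def)
        show ?thesis
        proof (cases "T x q")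
          case False then show ?thesis using tp e by (auto simp: f_def)
        next
          case True
          have "q = p + 2" using e tp True by (auto simp: f_def T_def)
          then have "Suc p < length w" "w!Suc p = (x, True)" using True by (auto simp: T_def L_def)
          then show ?thesis using reduced_nth[OF red, of p] fp by (auto simp: Fx_def)
        qed
      qed
    qed
  qed
  qed
  then have "\<exists>\<sigma>. \<forall>x. bij_betw (\<sigma> x) A A \<and> (\<forall>p\<in>D x. \<sigma> x p = f x p) \<and> (\<forall>p. p \<notin> A \<longrightarrow> \<sigma> x p = p)"
    by (rule choice)
  then obtain \<sigma> where \<sigma>all: "\<forall>x. bij_betw (\<sigma> x) A A \<and> (\<forall>p\<in>D x. \<sigma> x p = f x p) \<and> (\<forall>p. p \<notin> A \<longrightarrow> \<sigma> x p = p)"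
    by blast
  have \<sigma>: "\<And>x. bij_betw (\<sigma> x) A A" "\<And>x p. p \<in> D x \<Longrightarrow> \<sigma> x p = f x p"
      "\<And>x p. p \<notin> A \<Longrightarrow> \<sigma> x p = p"
    using \<sigma>all by blast+
  have AO: "A \<subseteq> \<Omega>" using lt by (auto simp: A_def \<Omega>_def L_def)
  define \<rho> where "\<rho> x = restrict (\<sigma> x) \<Omega>" for x
  have bij\<Omega>: "bij_betw (\<sigma> x) \<Omega> \<Omega>" for x by (rule bij_extend_id[OF \<sigma>(1)]) (use \<sigma>(3) AO in auto)
  have \<rho>B: "\<rho> x \<in> Bij \<Omega>" for x
    using bij\<Omega>[of x] by (simp add: \<rho>_def Bij_def)
  interpret BG: group "BijGroup \<Omega>" by (rule group_BijGroup)
  have \<rho>U: "\<rho> ` UNIV \<subseteq> carrier (BijGroup \<Omega>)" using \<rho>B by (auto simp: BijGroup_carrier)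
  have ev_closed: "eval_word (BijGroup \<Omega>) \<rho> r \<in> Bij \<Omega>" for r
  proof -
    have "eval_word (BijGroup \<Omega>) \<rho> r \<in> carrier (BijGroup \<Omega>)"
      by (rule eval_word_closed[OF group_BijGroup \<rho>U]) (simp add: words_on_def)
    then show ?thesis by (simp add: BijGroup_carrier)
  qed
  have letter_B: "(if snd a then \<rho> (fst a) else inv\<^bsub>BijGroup \<Omega>\<^esub> (\<rho> (fst a))) \<in> Bij \<Omega>" for a
    using \<rho>B BG.inv_closed by (auto simp: BijGroup_carrier)
  have ev_Cons: "eval_word (BijGroup \<Omega>) \<rho> (a # r) p =
     (if snd a then \<rho> (fst a) else inv\<^bsub>BijGroup \<Omega>\<^esub> (\<rho> (fst a))) (eval_word (BijGroup \<Omega>) \<rho> r p)"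
    if "p \<in> \<Omega>" for a r p
    using that ev_closed[of r] letter_B[of a] by (simp add: BijGroup_mult compose_def del: if_image_distrib)
  have inv\<rho>: "(inv\<^bsub>BijGroup \<Omega>\<^esub> (\<rho> x)) p = q" if "p \<in> \<Omega>" "q \<in> \<Omega>" "\<sigma> x q = p" for x p q
  proof -
    have "inv_into \<Omega> (\<rho> x) p = q"
      using that \<rho>B[of x] by (intro inv_into_f_eq) (auto simp: \<rho>_def Bij_def bij_betw_def)
    then show ?thesis using \<rho>B[of x] that by (simp add: inv_BijGroup)
  qed
  have L\<Omega>: "L \<in> \<Omega>" using lt by (simp add: \<Omega>_def L_def)
  have path: "eval_word (BijGroup \<Omega>) \<rho> (drop (L - j) w) L = L - j" if "j \<le> L" for j
    using that
  proof (induction j)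
    case 0
    then show ?case using L\<Omega> by (simp add: L_def BijGroup_one)
  next
    case (Suc j)
    define k where "k = L - Suc j"
    have kL: "k < L" "L - j = Suc k" using Suc.prems by (auto simp: k_def)
    have dk: "drop k w = w!k # drop (Suc k) w" using kL by (simp add: L_def Cons_nth_drop_Suc)
    have IH: "eval_word (BijGroup \<Omega>) \<rho> (drop (Suc k) w) L = Suc k" using Suc kL by simp
    have k\<Omega>: "k \<in> \<Omega>" "Suc k \<in> \<Omega>" using kL lt by (auto simp: \<Omega>_def L_def)
    obtain x b where wk: "w!k = (x, b)" by fastforce
    show ?case
    proof (cases b)
      case True
      have "T x (Suc k)" using wk True kL by (simp add: T_def)
      then have "\<sigma> x (Suc k) = k" using \<sigma>(2)[of "Suc k" x] by (simp add: D_def f_def)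
      note s1 = this
      have "eval_word (BijGroup \<Omega>) \<rho> (drop k w) L = \<rho> x (eval_word (BijGroup \<Omega>) \<rho> (drop (Suc k) w) L)"
        using ev_Cons[OF L\<Omega>, of "w!k" "drop (Suc k) w"] dk wk True by simp
      also have "\<dots> = \<sigma> x (Suc k)" using IH k\<Omega> by (simp add: \<rho>_def)
      finally have "eval_word (BijGroup \<Omega>) \<rho> (drop k w) L = k" using s1 by simp
      then show ?thesis unfolding k_def[symmetric] .

    next
      case False
      have "Fx x k" using wk False kL by (simp add: Fx_def)
      moreover then have "\<not> T x k" using adj by blast
      ultimately have "\<sigma> x k = Suc k" using \<sigma>(2)[of k x] by (simp add: D_def f_def)
      then have "(inv\<^bsub>BijGroup \<Omega>\<^esub> (\<rho> x)) (Suc k) = k" using inv\<rho> k\<Omega> by blast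
      note s1 = this
      have "eval_word (BijGroup \<Omega>) \<rho> (drop k w) L = (inv\<^bsub>BijGroup \<Omega>\<^esub> (\<rho> x)) (eval_word (BijGroup \<Omega>) \<rho> (drop (Suc k) w) L)"
        using ev_Cons[OF L\<Omega>, of "w!k" "drop (Suc k) w"] dk wk False by simp
      also have "\<dots> = k" using IH s1 by simp
      finally show ?thesis unfolding k_def[symmetric] .

    qed
  qed
  have "eval_word (BijGroup \<Omega>) \<rho> w L = 0" using path[of L] by simp
  moreover have "\<one>\<^bsub>BijGroup \<Omega>\<^esub> L = L" using L\<Omega> by (simp add: BijGroup_one)
  moreover have "L \<noteq> 0" using ne by (simp add: L_def)
  ultimately have neq: "eval_word (BijGroup \<Omega>) \<rho> w \<noteq> \<one>\<^bsub>BijGroup \<Omega>\<^esub>" by force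
  have fix_out: "eval_word (BijGroup \<Omega>) \<rho> r p = p" if "p \<in> \<Omega>" "p \<notin> A" for r p
  proof (induction r)
    case Nil then show ?case using that by (simp add: BijGroup_one)
  next
    case (Cons a r)
    have s: "\<sigma> (fst a) p = p" using \<sigma>(3) that by blast
    show ?case
    proof (cases "snd a")
      case True
      have "eval_word (BijGroup \<Omega>) \<rho> (a # r) p = \<rho> (fst a) (eval_word (BijGroup \<Omega>) \<rho> r p)"
        using ev_Cons[OF that(1), of a r] True by simp
      also have "\<dots> = \<rho> (fst a) p" using Cons by simp
      also have "\<dots> = p" using s that by (simp add: \<rho>_def)
      finally show ?thesis .
    next
      case False
      have "eval_word (BijGroup \<Omega>) \<rho> (a # r) p = (inv\<^bsub>BijGroup \<Omega>\<^esub> (\<rho> (fst a))) (eval_word (BijGroup \<Omega>) \<rho> r p)"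
        using ev_Cons[OF that(1), of a r] False by simp
      also have "\<dots> = p" using Cons inv\<rho>[OF that(1) that(1) s] by simp
      finally show ?thesis .
    qed
  qed
  have dbound: "dOm \<Omega> (eval_word (BijGroup \<Omega>) \<rho> r) \<one>\<^bsub>BijGroup \<Omega>\<^esub> \<le> real (L + 1) / real N" for r
  proof -
    have "{\<omega> \<in> \<Omega>. eval_word (BijGroup \<Omega>) \<rho> r \<omega> \<noteq> \<one>\<^bsub>BijGroup \<Omega>\<^esub> \<omega>} \<subseteq> A"
      using fix_out by (auto simp: BijGroup_one)
    then have "card {\<omega> \<in> \<Omega>. eval_word (BijGroup \<Omega>) \<rho> r \<omega> \<noteq> \<one>\<^bsub>BijGroup \<Omega>\<^esub> \<omega>} \<le> L + 1"
      using card_mono[of A] by (fastforce simp: A_def)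
    then show ?thesis unfolding dOm_def \<Omega>_def
      by (simp add: divide_right_mono \<Omega>_def)
  qed
  show ?thesis using \<rho>B neq dbound by (auto simp: \<Omega>_def L_def)
qed



lemma eval_word_single: "group G \<Longrightarrow> s x \<in> carrier G \<Longrightarrow> eval_word G s [(x, True)] = s x"
  by (simp add: group.is_monoid monoid.r_one)

lemma in_ballS: "w \<in> words_on X \<Longrightarrow> length w \<le> l \<Longrightarrow> eval_word G s w \<in> ballS G X s l"
  by (auto simp: ballS_def)

lemma ballS_carrier: "group G \<Longrightarrow> s ` X \<subseteq> carrier G \<Longrightarrow> ballS G X s l \<subseteq> carrier G"
  using eval_word_closed by (auto simp: ballS_def)

lemma gen_in_ballS: "group G \<Longrightarrow> s ` X \<subseteq> carrier G \<Longrightarrow> x \<in> X \<Longrightarrow> 1 \<le> l \<Longrightarrow> s x \<in> ballS G X s l"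
  using in_ballS[of "[(x,True)]" X l G s] eval_word_single[of G s x] by auto

lemma one_in_ballS: "\<one>\<^bsub>G\<^esub> \<in> ballS G X s l"
  using in_ballS[of "[]" X l G s] by simp

lemma finite_ballS:
  assumes "finite X" shows "finite (ballS G X s l)"
proof -
  have "ballS G X s l \<subseteq> eval_word G s ` {w. set w \<subseteq> X \<times> UNIV \<and> length w \<le> l}"
  proof
    fix g assume "g \<in> ballS G X s l"
    then obtain w where w: "g = eval_word G s w" "w \<in> words_on X" "length w \<le> l" by (auto simp: ballS_def)
    have "set w \<subseteq> X \<times> UNIV" using w(2) by (auto simp: words_on_def mem_Times_iff)
    then show "g \<in> eval_word G s ` {w. set w \<subseteq> X \<times> UNIV \<and> length w \<le> l}" using w by blast
  qed
  moreover have "finite {w. set w \<subseteq> X \<times> (UNIV::bool set) \<and> length w \<le> l}"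
    using assms by (intro finite_lists_length_le) auto
  ultimately show ?thesis using finite_subset by blast
qed

lemma chain_hom:
  assumes "finite \<Omega>" "\<And>x. x \<in> X \<Longrightarrow> \<rho> x \<in> Bij \<Omega>" "\<And>x. x \<in> X \<Longrightarrow> \<tau> x \<in> Bij \<Omega>"
    "\<And>x. x \<in> X \<Longrightarrow> dOm \<Omega> (\<rho> x) (\<tau> x) \<le> e" "u \<in> words_on X"
  shows "dOm \<Omega> (eval_word (BijGroup \<Omega>) \<rho> u) (eval_word (BijGroup \<Omega>) \<tau> u) \<le> real (length u) * e"
  using assms(5)
proof (induction u)
  case Nil then show ?case by simp
next
  case (Cons a u)
  interpret BG: group "BijGroup \<Omega>" by (rule group_BijGroup)
  have x: "fst a \<in> X" "u \<in> words_on X" using Cons by auto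
  have \<rho>c: "\<rho> ` X \<subseteq> carrier (BijGroup \<Omega>)" "\<tau> ` X \<subseteq> carrier (BijGroup \<Omega>)"
    using assms by (auto simp: BijGroup_carrier)
  define R1 where "R1 = eval_word (BijGroup \<Omega>) \<rho> u"
  define R2 where "R2 = eval_word (BijGroup \<Omega>) \<tau> u"
  define l1 where "l1 = (if snd a then \<rho> (fst a) else inv\<^bsub>BijGroup \<Omega>\<^esub> (\<rho> (fst a)))"
  define l2 where "l2 = (if snd a then \<tau> (fst a) else inv\<^bsub>BijGroup \<Omega>\<^esub> (\<tau> (fst a)))"
  have R: "R1 \<in> Bij \<Omega>" "R2 \<in> Bij \<Omega>"
    using eval_word_closed[OF group_BijGroup \<rho>c(1) x(2)] eval_word_closed[OF group_BijGroup \<rho>c(2) x(2)]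
    by (auto simp: R1_def R2_def BijGroup_carrier)
  have l: "l1 \<in> Bij \<Omega>" "l2 \<in> Bij \<Omega>"
    using assms(2,3)[OF x(1)] BG.inv_closed by (auto simp: l1_def l2_def BijGroup_carrier)
  have dl: "dOm \<Omega> l1 l2 \<le> e"
    using assms(2,3,4)[OF x(1)] dOm_inv by (auto simp: l1_def l2_def)
  have "dOm \<Omega> (l1 \<otimes>\<^bsub>BijGroup \<Omega>\<^esub> R1) (l2 \<otimes>\<^bsub>BijGroup \<Omega>\<^esub> R2)
     \<le> dOm \<Omega> (l1 \<otimes>\<^bsub>BijGroup \<Omega>\<^esub> R1) (l1 \<otimes>\<^bsub>BijGroup \<Omega>\<^esub> R2) + dOm \<Omega> (l1 \<otimes>\<^bsub>BijGroup \<Omega>\<^esub> R2) (l2 \<otimes>\<^bsub>BijGroup \<Omega>\<^esub> R2)"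
    by (rule dOm_triangle[OF assms(1)])
  also have "\<dots> = dOm \<Omega> R1 R2 + dOm \<Omega> l1 l2" using R l by (simp add: dOm_left dOm_right)
  also have "\<dots> \<le> real (length u) * e + e" using Cons.IH[OF x(2)] dl by (simp add: R1_def R2_def)
  finally show ?case by (simp add: l1_def l2_def R1_def R2_def algebra_simps)
qed

lemma chain_almost:
  assumes G: "group G" and sX: "s ` X \<subseteq> carrier G" and t1: "1 \<le> t"
    and ar: "almost_rep G (ballS G X s t) (1 / real t) \<Omega> \<phi>"
    and u: "u \<in> words_on X" "length u \<le> t"
  shows "dOm \<Omega> (eval_word (BijGroup \<Omega>) (\<phi> \<circ> s) u) (\<phi> (eval_word G s u)) \<le> real (length u) / real t"
  using u
proof (induction u)
  case Nil
  then show ?case using ar one_in_ballS[of G X s t] by (simp add: almost_rep_def)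
next
  case (Cons a u)
  interpret BG: group "BijGroup \<Omega>" by (rule group_BijGroup)
  interpret G: group G by (rule G)
  let ?B = "ballS G X s t"
  have fin: "finite \<Omega>" using ar by (simp add: almost_rep_def)
  have \<phi>B: "\<phi> g \<in> Bij \<Omega>" if "g \<in> ?B" for g using ar that by (auto simp: almost_rep_def BijGroup_carrier)
  have mult: "dOm \<Omega> (\<phi> (g \<otimes>\<^bsub>G\<^esub> h)) (\<phi> g \<otimes>\<^bsub>BijGroup \<Omega>\<^esub> \<phi> h) < 1 / real t"
    if "g \<in> ?B" "h \<in> ?B" "g \<otimes>\<^bsub>G\<^esub> h \<in> ?B" for g h using ar that by (auto simp: almost_rep_def)
  have x: "fst a \<in> X" "u \<in> words_on X" "length u \<le> t" using Cons by auto
  define sx where "sx = s (fst a)"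
  have sxc: "sx \<in> carrier G" using sX x by (auto simp: sx_def)
  have sxB: "sx \<in> ?B" using gen_in_ballS[OF G sX x(1) t1] by (simp add: sx_def)
  define g' where "g' = eval_word G s u"
  have g'c: "g' \<in> carrier G" using eval_word_closed[OF G sX x(2)] by (simp add: g'_def)
  have g'B: "g' \<in> ?B" using in_ballS[OF x(2) x(3)] by (simp add: g'_def)
  define p where "p = eval_word G s (a # u)"
  have pB: "p \<in> ?B" unfolding p_def by (rule in_ballS) (use Cons.prems in auto)
  define R where "R = eval_word (BijGroup \<Omega>) (\<phi> \<circ> s) u"
  have \<phi>sc: "(\<phi> \<circ> s) ` X \<subseteq> carrier (BijGroup \<Omega>)"
    using \<phi>B gen_in_ballS[OF G sX _ t1] by (auto simp: BijGroup_carrier)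
  have RB: "R \<in> Bij \<Omega>" using eval_word_closed[OF group_BijGroup \<phi>sc x(2)] by (simp add: R_def BijGroup_carrier)
  have IH: "dOm \<Omega> R (\<phi> g') \<le> real (length u) / real t" unfolding R_def g'_def by (rule Cons.IH[OF x(2) x(3)])
  show ?case
  proof (cases "snd a")
    case True
    have p: "p = sx \<otimes>\<^bsub>G\<^esub> g'" using True by (simp add: p_def sx_def g'_def)
    have "dOm \<Omega> (\<phi> sx \<otimes>\<^bsub>BijGroup \<Omega>\<^esub> R) (\<phi> p) \<le>
        dOm \<Omega> (\<phi> sx \<otimes>\<^bsub>BijGroup \<Omega>\<^esub> R) (\<phi> sx \<otimes>\<^bsub>BijGroup \<Omega>\<^esub> \<phi> g') + dOm \<Omega> (\<phi> sx \<otimes>\<^bsub>BijGroup \<Omega>\<^esub> \<phi> g') (\<phi> p)"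
      by (rule dOm_triangle[OF fin])
    also have "\<dots> = dOm \<Omega> R (\<phi> g') + dOm \<Omega> (\<phi> (sx \<otimes>\<^bsub>G\<^esub> g')) (\<phi> sx \<otimes>\<^bsub>BijGroup \<Omega>\<^esub> \<phi> g')"
      using RB \<phi>B[OF sxB] \<phi>B[OF g'B] p by (simp add: dOm_left dOm_sym)
    also have "\<dots> \<le> real (length u) / real t + 1 / real t"
      using IH mult[OF sxB g'B] pB p by fastforce
    finally have c: "dOm \<Omega> (\<phi> sx \<otimes>\<^bsub>BijGroup \<Omega>\<^esub> R) (\<phi> p) \<le> real (length u) / real t + 1 / real t" .
    have eq: "eval_word (BijGroup \<Omega>) (\<phi> \<circ> s) (a # u) = \<phi> sx \<otimes>\<^bsub>BijGroup \<Omega>\<^esub> R"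
      using True by (simp add: R_def sx_def)
    show ?thesis unfolding eq p_def[symmetric] using c by (simp add: add_divide_distrib)
  next
    case False
    have p: "p = inv\<^bsub>G\<^esub> sx \<otimes>\<^bsub>G\<^esub> g'" using False by (simp add: p_def sx_def g'_def)
    have g'p: "g' = sx \<otimes>\<^bsub>G\<^esub> p" using p sxc g'c by (simp add: G.m_assoc[symmetric])
    have \<sigma>B: "\<phi> sx \<in> Bij \<Omega>" "inv\<^bsub>BijGroup \<Omega>\<^esub> (\<phi> sx) \<in> Bij \<Omega>"
      using \<phi>B[OF sxB] BG.inv_closed by (auto simp: BijGroup_carrier)
    have "dOm \<Omega> (inv\<^bsub>BijGroup \<Omega>\<^esub> (\<phi> sx) \<otimes>\<^bsub>BijGroup \<Omega>\<^esub> R) (\<phi> p)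
        = dOm \<Omega> (\<phi> sx \<otimes>\<^bsub>BijGroup \<Omega>\<^esub> (inv\<^bsub>BijGroup \<Omega>\<^esub> (\<phi> sx) \<otimes>\<^bsub>BijGroup \<Omega>\<^esub> R)) (\<phi> sx \<otimes>\<^bsub>BijGroup \<Omega>\<^esub> \<phi> p)"
      using \<sigma>B RB \<phi>B[OF pB] BG.m_closed by (subst dOm_left) (auto simp: BijGroup_carrier)
    also have "\<dots> = dOm \<Omega> R (\<phi> sx \<otimes>\<^bsub>BijGroup \<Omega>\<^esub> \<phi> p)"
      using \<sigma>B RB by (simp add: BG.m_assoc[symmetric] BijGroup_carrier)
    also have "\<dots> \<le> dOm \<Omega> R (\<phi> g') + dOm \<Omega> (\<phi> g') (\<phi> sx \<otimes>\<^bsub>BijGroup \<Omega>\<^esub> \<phi> p)"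
      by (rule dOm_triangle[OF fin])
    also have "\<dots> \<le> real (length u) / real t + 1 / real t"
      using IH mult[OF sxB pB] g'B g'p by fastforce
    finally have c: "dOm \<Omega> (inv\<^bsub>BijGroup \<Omega>\<^esub> (\<phi> sx) \<otimes>\<^bsub>BijGroup \<Omega>\<^esub> R) (\<phi> p) \<le> real (length u) / real t + 1 / real t" .
    have eq: "eval_word (BijGroup \<Omega>) (\<phi> \<circ> s) (a # u) = inv\<^bsub>BijGroup \<Omega>\<^esub> (\<phi> sx) \<otimes>\<^bsub>BijGroup \<Omega>\<^esub> R"
      using False by (simp add: R_def sx_def)
    show ?thesis unfolding eq p_def[symmetric] using c by (simp add: add_divide_distrib)
  qed
qed



lemma transport_group:
  assumes H: "group H" and fin: "finite (carrier H)"
  shows "\<exists>\<Delta>::nat monoid. group \<Delta> \<and> finite (carrier \<Delta>) \<and> card (carrier \<Delta>) = card (carrier H) \<and>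
           (\<exists>e. e \<in> hom H \<Delta> \<and> inj_on e (carrier H))"
proof -
  interpret H: group H by (rule H)
  obtain e :: "_ \<Rightarrow> nat" and n where en: "e ` carrier H = {i. i < n}" "inj_on e (carrier H)"
    using finite_imp_inj_to_nat_seg[OF fin] by blast
  define f where "f = inv_into (carrier H) e"
  define \<Delta> where "\<Delta> = \<lparr>carrier = e ` carrier H, monoid.mult = (\<lambda>a b. e (f a \<otimes>\<^bsub>H\<^esub> f b)), one = e \<one>\<^bsub>H\<^esub>\<rparr>"
  have fe: "f (e x) = x" if "x \<in> carrier H" for x
    using en(2) that by (simp add: f_def inv_into_f_f)
  have fc: "f a \<in> carrier H" if "a \<in> e ` carrier H" for a
    using that by (simp add: f_def inv_into_into)
  have ef: "e (f a) = a" if "a \<in> e ` carrier H" for a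
    using that by (simp add: f_def f_inv_into_f)
  have car: "carrier \<Delta> = e ` carrier H" and mul: "\<And>a b. a \<otimes>\<^bsub>\<Delta>\<^esub> b = e (f a \<otimes>\<^bsub>H\<^esub> f b)"
    and one: "\<one>\<^bsub>\<Delta>\<^esub> = e \<one>\<^bsub>H\<^esub>"
    by (simp_all add: \<Delta>_def)
  have g: "group \<Delta>"
  proof (rule groupI)
    fix x y assume "x \<in> carrier \<Delta>" "y \<in> carrier \<Delta>"
    then show "x \<otimes>\<^bsub>\<Delta>\<^esub> y \<in> carrier \<Delta>" using fc by (simp add: car mul)
  next
    show "\<one>\<^bsub>\<Delta>\<^esub> \<in> carrier \<Delta>" by (simp add: car one)
  next
    fix x y z assume xyz: "x \<in> carrier \<Delta>" "y \<in> carrier \<Delta>" "z \<in> carrier \<Delta>"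
    then have c: "f x \<in> carrier H" "f y \<in> carrier H" "f z \<in> carrier H" using fc by (auto simp: car)
    show "x \<otimes>\<^bsub>\<Delta>\<^esub> y \<otimes>\<^bsub>\<Delta>\<^esub> z = x \<otimes>\<^bsub>\<Delta>\<^esub> (y \<otimes>\<^bsub>\<Delta>\<^esub> z)"
      using c by (simp add: mul fe H.m_assoc)
  next
    fix x assume "x \<in> carrier \<Delta>"
    then have "x \<in> e ` carrier H" "f x \<in> carrier H" using fc by (auto simp: car)
    then show "\<one>\<^bsub>\<Delta>\<^esub> \<otimes>\<^bsub>\<Delta>\<^esub> x = x" by (simp add: mul one fe ef)
  next
    fix x assume "x \<in> carrier \<Delta>"
    then have x: "x \<in> e ` carrier H" "f x \<in> carrier H" using fc by (auto simp: car)
    show "\<exists>y\<in>carrier \<Delta>. y \<otimes>\<^bsub>\<Delta>\<^esub> x = \<one>\<^bsub>\<Delta>\<^esub>"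
    proof (intro bexI)
      show "e (inv\<^bsub>H\<^esub> (f x)) \<otimes>\<^bsub>\<Delta>\<^esub> x = \<one>\<^bsub>\<Delta>\<^esub>" using x by (simp add: mul one fe)
      show "e (inv\<^bsub>H\<^esub> (f x)) \<in> carrier \<Delta>" using x by (simp add: car)
    qed
  qed
  have hom: "e \<in> hom H \<Delta>"
  proof (rule homI)
    fix x assume "x \<in> carrier H" then show "e x \<in> carrier \<Delta>" by (simp add: car)
  next
    fix x y assume "x \<in> carrier H" "y \<in> carrier H"
    then show "e (x \<otimes>\<^bsub>H\<^esub> y) = e x \<otimes>\<^bsub>\<Delta>\<^esub> e y" by (simp add: mul fe)
  qed
  have c1: "card (carrier \<Delta>) = card (carrier H)" using en(2) by (simp add: car card_image)
  have c2: "finite (carrier \<Delta>)" using fin by (simp add: car)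
  have "group \<Delta> \<and> finite (carrier \<Delta>) \<and> card (carrier \<Delta>) = card (carrier H) \<and> (\<exists>e. e \<in> hom H \<Delta> \<and> inj_on e (carrier H))"
    using g hom en(2) c1 c2 by blast
  then show ?thesis by (rule exI)
qed

lemma card_Bij_le:
  assumes "finite \<Omega>"
  shows "finite (Bij \<Omega>) \<and> card (Bij \<Omega>) \<le> fact (card \<Omega>)"
proof -
  define g where "g f = (\<lambda>x. if x \<in> \<Omega> then f x else x)" for f :: "'a \<Rightarrow> 'a"
  have inj: "inj_on g (Bij \<Omega>)"
  proof (rule inj_onI)
    fix a b assume ab: "a \<in> Bij \<Omega>" "b \<in> Bij \<Omega>" "g a = g b"
    have "a x = b x" if x: "x \<in> \<Omega>" for x
    proof -
      have "g a x = g b x" using ab(3) by simp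
      then show ?thesis using x by (simp add: g_def)
    qed
    then show "a = b" by (rule extensionalityI[OF Bij_imp_extensional[OF ab(1)] Bij_imp_extensional[OF ab(2)]])
  qed
  have sub: "g ` Bij \<Omega> \<subseteq> {p. p permutes \<Omega>}"
  proof
    fix p assume "p \<in> g ` Bij \<Omega>"
    then obtain a where a: "a \<in> Bij \<Omega>" "p = g a" by blast
    have "bij_betw a \<Omega> \<Omega>" using a(1) by (simp add: Bij_def)
    have eq: "\<And>x. x \<in> \<Omega> \<Longrightarrow> a x = g a x" by (simp add: g_def)
    have "bij_betw (g a) \<Omega> \<Omega>" using bij_betw_cong[of \<Omega> a "g a" \<Omega>, OF eq] \<open>bij_betw a \<Omega> \<Omega>\<close> by simp
    then have "bij_betw p \<Omega> \<Omega>" using a(2) by simp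
    moreover have "\<And>x. x \<notin> \<Omega> \<Longrightarrow> p x = x" using a(2) by (simp add: g_def)
    ultimately show "p \<in> {p. p permutes \<Omega>}" by (simp add: bij_imp_permutes)
  qed
  have fp: "finite {p. p permutes \<Omega>}" using finite_permutations[OF assms] .
  then have "finite (g ` Bij \<Omega>)" using sub finite_subset by blast
  then have f1: "finite (Bij \<Omega>)" using inj finite_image_iff by blast
  have "card (Bij \<Omega>) = card (g ` Bij \<Omega>)" using inj by (simp add: card_image)
  also have "\<dots> \<le> card {p. p permutes \<Omega>}" using sub fp by (rule card_mono[rotated])
  also have "\<dots> = fact (card \<Omega>)" using card_permutations[OF refl assms] .
  finally show ?thesis using f1 by simp
qed



lemma no_close:
  assumes G: "group G" and sX: "s ` X \<subseteq> carrier G"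
    and v: "v \<in> kerpi G X s" "v \<noteq> []" "length v < N"
    and vp: "valid_pair G X s (1 / real N) \<delta> E"
  shows "\<exists>r\<in>E. \<delta> \<le> real (length v + 1) / real N \<and> r \<noteq> []"
proof (rule ccontr)
  assume nc: "\<not> ?thesis"
  have vr: "reduced v" "v \<in> words_on X" "eval_word G s v = \<one>\<^bsub>G\<^esub>"
    using v(1) by (auto simp: kerpi_def free_elems_def)
  define \<Omega> where "\<Omega> = {0..<N}"
  obtain \<rho> where \<rho>B: "\<forall>x. \<rho> x \<in> Bij \<Omega>"
    and neq: "eval_word (BijGroup \<Omega>) \<rho> v \<noteq> \<one>\<^bsub>BijGroup \<Omega>\<^esub>"
    and db: "\<forall>r. dOm \<Omega> (eval_word (BijGroup \<Omega>) \<rho> r) \<one>\<^bsub>BijGroup \<Omega>\<^esub> \<le> real (length v + 1) / real N"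
    using path_perm[OF vr(1) v(2) v(3)] unfolding \<Omega>_def by blast
  have dpos: "0 < \<delta>" and valid: "\<forall>(\<Omega>::nat set) r. finite \<Omega> \<longrightarrow> r ` X \<subseteq> carrier (BijGroup \<Omega>) \<longrightarrow>
        (\<forall>w \<in> E. dOm \<Omega> (eval_word (BijGroup \<Omega>) r w) \<one>\<^bsub>BijGroup \<Omega>\<^esub> < \<delta>) \<longrightarrow>
        (\<exists>\<phi> \<in> hom G (BijGroup \<Omega>). \<forall>x \<in> X. dOm \<Omega> (r x) (\<phi> (s x)) < 1 / real N)"
    using vp unfolding valid_pair_def by blast+
  have small: "\<forall>w \<in> E. dOm \<Omega> (eval_word (BijGroup \<Omega>) \<rho> w) \<one>\<^bsub>BijGroup \<Omega>\<^esub> < \<delta>"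
  proof
    fix r assume r: "r \<in> E"
    show "dOm \<Omega> (eval_word (BijGroup \<Omega>) \<rho> r) \<one>\<^bsub>BijGroup \<Omega>\<^esub> < \<delta>"
    proof (cases "r = []")
      case True then show ?thesis using dpos by simp
    next
      case False
      then have "\<not> \<delta> \<le> real (length v + 1) / real N" using nc r by blast
      then show ?thesis using db[rule_format, of r] by linarith
    qed
  qed
  have fin: "finite \<Omega>" by (simp add: \<Omega>_def)
  have \<rho>X: "\<rho> ` X \<subseteq> carrier (BijGroup \<Omega>)" using \<rho>B by (auto simp: BijGroup_carrier)
  obtain \<psi> where \<psi>: "\<psi> \<in> hom G (BijGroup \<Omega>)" and cl: "\<forall>x \<in> X. dOm \<Omega> (\<rho> x) (\<psi> (s x)) < 1 / real N"
    using valid[rule_format, OF fin \<rho>X small[rule_format]] by blast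
  have cardO: "card \<Omega> = N" by (simp add: \<Omega>_def)
  have eqx: "\<rho> x = \<psi> (s x)" if "x \<in> X" for x
  proof (rule dOm_zero_eq[OF fin])
    show "\<rho> x \<in> Bij \<Omega>" using \<rho>B by blast
    show "\<psi> (s x) \<in> Bij \<Omega>" using hom_in_carrier[OF \<psi>] sX that by (auto simp: BijGroup_carrier)
    show "dOm \<Omega> (\<rho> x) (\<psi> (s x)) < 1 / real (card \<Omega>)" using cl that cardO by simp
  qed
  have "eval_word (BijGroup \<Omega>) \<rho> v = eval_word (BijGroup \<Omega>) (\<psi> \<circ> s) v"
  proof (rule eval_word_cong)
    fix a assume "a \<in> set v"
    then have "fst a \<in> X" using vr(2) by (auto simp: words_on_def)
    then show "\<rho> (fst a) = (\<psi> \<circ> s) (fst a)" using eqx by simp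
  qed
  also have "\<dots> = \<psi> (eval_word G s v)"
    using eval_word_hom[OF G group_BijGroup \<psi> sX vr(2)] by simp
  also have "\<dots> = \<one>\<^bsub>BijGroup \<Omega>\<^esub>" using vr(3) hom_one[OF \<psi> G group_BijGroup] by simp
  finally show False using neq by simp
qed

lemma F_lower:
  assumes G: "group G" and sX: "s ` X \<subseteq> carrier G"
    and w: "w \<in> kerpi G X s" "w \<noteq> []" "length w < N"
    and vp: "valid_pair G X s (1 / real N) \<delta> E"
  shows "real N / 2 \<le> real (norm_rel E) / \<delta>"
proof -
  have dpos: "0 < \<delta>" "\<delta> \<le> 1" and finE: "finite E" and Ek: "E \<subseteq> kerpi G X s"
    using vp unfolding valid_pair_def by blast+
  obtain r0 where r0: "r0 \<in> E" "r0 \<noteq> []" using no_close[OF G sX w vp] by blast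
  have nr: "length r0 \<le> norm_rel E"
    unfolding norm_rel_def by (rule member_le_sum[OF r0(1) _ finE]) simp
  have L1: "1 \<le> length r0" using r0(2) by (cases r0) auto
  show ?thesis
  proof (cases "N \<le> length r0")
    case True
    then have "real N \<le> real (norm_rel E)" using nr by simp
    moreover have "real (norm_rel E) \<le> real (norm_rel E) / \<delta>"
      using dpos by (simp add: le_divide_eq mult_left_le)
    ultimately have "real N \<le> real (norm_rel E) / \<delta>" by linarith
    moreover have "0 \<le> real N" by simp
    ultimately show ?thesis by linarith
  next
    case False
    then have "length r0 < N" by simp
    then obtain r where "r \<in> E" "\<delta> \<le> real (length r0 + 1) / real N"
      using no_close[OF G sX _ r0(2) _ vp] r0(1) Ek by blast
    then have d: "\<delta> \<le> real (length r0 + 1) / real N" by simp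
    have Npos: "real N > 0" using \<open>length r0 < N\<close> by simp
    have "real N / 2 * \<delta> \<le> real N / 2 * (real (length r0 + 1) / real N)"
      using d Npos by (intro mult_left_mono) auto
    also have "\<dots> = real (length r0 + 1) / 2" using Npos by simp
    also have "\<dots> \<le> real (norm_rel E)" using L1 nr by simp
    finally show ?thesis using dpos by (simp add: le_divide_eq)
  qed
qed



theorem proposition2p20:
  fixes G :: "('g, 'm) monoid_scheme" and X :: "'x set" and s :: "'x \<Rightarrow> 'g"
  assumes "group G"
    and "finite X"
    and "s ` X \<subseteq> carrier G"
    and "\<forall>g \<in> carrier G. \<exists>w \<in> free_elems X. eval_word G s w = g"
    and "\<exists>w \<in> free_elems X. w \<noteq> [] \<and> eval_word G s w = \<one>\<^bsub>G\<^esub>"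
    and "sofic G"
    and "stable G X s"
  shows "\<exists>C > 0. \<forall>l::nat. real l \<ge> C \<longrightarrow>
           enat (fact (sofic_profile_real G X s (2 * stab_fun G X s (10 * real l))))
             \<ge> rf_profile G X s l"
proof -
  note G = assms(1) and finX = assms(2) and sX = assms(3) and sof = assms(6) and stab = assms(7)
  interpret G: group G by (rule G)
  obtain w where w: "w \<in> free_elems X" "w \<noteq> []" "eval_word G s w = \<one>\<^bsub>G\<^esub>" using assms(5) by blast
  have wk: "w \<in> kerpi G X s" using w by (simp add: kerpi_def)
  show ?thesis
  proof (intro exI[of _ "real (length w + 1)"] conjI allI impI)
    show "0 < real (length w + 1)" by simp
    fix l :: nat assume lC: "real (length w + 1) \<le> real l"
    then have l1: "1 \<le> l" "length w < 10 * l" by simp_all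
    define N where "N = 10 * l"
    have eps: "1 / (10 * real l) = 1 / real N" by (simp add: N_def)
    define S where "S = {real (norm_rel E) / \<delta> | \<delta> E. valid_pair G X s (1 / (10 * real l)) \<delta> E}"
    define F where "F = Inf S"
    have Fdef: "stab_fun G X s (10 * real l) = F" by (simp add: stab_fun_def S_def F_def)
    have Sne: "S \<noteq> {}"
    proof -
      have "1 / (10 * real l) > 0" using l1 by simp
      then obtain \<delta> E where "valid_pair G X s (1 / (10 * real l)) \<delta> E"
        using stab unfolding stable_def by blast
      then show ?thesis by (auto simp: S_def)
    qed
    have Slow: "real N / 2 \<le> y" if "y \<in> S" for y
    proof -
      obtain \<delta> E where y: "y = real (norm_rel E) / \<delta>" "valid_pair G X s (1 / real N) \<delta> E"
        using \<open>y \<in> S\<close> eps by (auto simp: S_def)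
      show ?thesis unfolding y(1) by (rule F_lower[OF G sX wk w(2) _ y(2)]) (use l1 in \<open>simp add: N_def\<close>)
    qed
    have Fge: "real N / 2 \<le> F" unfolding F_def by (rule cInf_greatest[OF Sne Slow])
    then have Fge': "5 * real l \<le> F" by (simp add: N_def)
    define t where "t = nat \<lfloor>2 * F\<rfloor>"
    have tF: "real t > 2 * F - 1" "real t \<le> 2 * F"
      using Fge' l1 by (simp_all add: t_def)
    have t10: "10 * l \<le> t" using tF(1) Fge' by linarith
    have t1: "1 \<le> t" using t10 l1 by simp
    have tpos: "real t > 0" using t1 by simp
    have "F < real t" using tF(1) Fge' l1 by linarith
    then obtain y where "y \<in> S" "y < real t" using cInf_lessD[OF Sne] unfolding F_def by blast
    then obtain \<delta> E where dE: "real (norm_rel E) / \<delta> < real t" "valid_pair G X s (1 / (10 * real l)) \<delta> E"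
      by (auto simp: S_def)
    have dpos: "0 < \<delta>" "\<delta> \<le> 1" and finE: "finite E" and Ek: "E \<subseteq> kerpi G X s"
      and valid: "\<forall>(\<Omega>::nat set) r. finite \<Omega> \<longrightarrow> r ` X \<subseteq> carrier (BijGroup \<Omega>) \<longrightarrow>
        (\<forall>w \<in> E. dOm \<Omega> (eval_word (BijGroup \<Omega>) r w) \<one>\<^bsub>BijGroup \<Omega>\<^esub> < \<delta>) \<longrightarrow>
        (\<exists>\<phi> \<in> hom G (BijGroup \<Omega>). \<forall>x \<in> X. dOm \<Omega> (r x) (\<phi> (s x)) < 1 / (10 * real l))"
      using dE(2) unfolding valid_pair_def by blast+
    have normE: "real (norm_rel E) < real t * \<delta>" using dE(1) dpos by (simp add: divide_less_eq)
    let ?B = "ballS G X s t"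
    have "\<exists>(\<Omega>::nat set) \<phi>. almost_rep G ?B (1 / real t) \<Omega> \<phi>"
    proof -
      have fB: "finite ?B" by (rule finite_ballS[OF finX])
      have sB: "?B \<subseteq> carrier G" by (rule ballS_carrier[OF G sX])
      have ep: "1 / real t > 0" using tpos by simp
      show ?thesis using sof[unfolded sofic_def, rule_format, OF fB sB ep] by blast
    qed
    then have "\<exists>n (\<Omega>::nat set) \<phi>. card \<Omega> = n \<and> almost_rep G ?B (1 / real t) \<Omega> \<phi>" by blast
    then have "\<exists>(\<Omega>::nat set) \<phi>. card \<Omega> = sofic_profile G X s t \<and> almost_rep G ?B (1 / real t) \<Omega> \<phi>"
      unfolding sofic_profile_def by (rule LeastI_ex)
    then obtain \<Omega> :: "nat set" and \<phi> where cO: "card \<Omega> = sofic_profile G X s t"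
      and ar: "almost_rep G ?B (1 / real t) \<Omega> \<phi>" by blast
    have Dt: "sofic_profile_real G X s (2 * stab_fun G X s (10 * real l)) = card \<Omega>"
      using cO by (simp add: sofic_profile_real_def Fdef t_def)
    have fin\<Omega>: "finite \<Omega>" using ar by (simp add: almost_rep_def)
    have \<phi>B: "\<phi> g \<in> Bij \<Omega>" if "g \<in> ?B" for g using ar that by (auto simp: almost_rep_def BijGroup_carrier)
    have \<phi>1: "\<phi> \<one>\<^bsub>G\<^esub> = \<one>\<^bsub>BijGroup \<Omega>\<^esub>" using ar one_in_ballS[of G X s t] by (simp add: almost_rep_def)
    have \<phi>far: "dOm \<Omega> (\<phi> g) \<one>\<^bsub>BijGroup \<Omega>\<^esub> > 1 - 1 / real t" if "g \<in> ?B" "g \<noteq> \<one>\<^bsub>G\<^esub>" for g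
      using ar that by (simp add: almost_rep_def)
    define \<rho> where "\<rho> = \<phi> \<circ> s"
    have \<rho>B: "\<rho> x \<in> Bij \<Omega>" if "x \<in> X" for x using \<phi>B gen_in_ballS[OF G sX that t1] by (simp add: \<rho>_def)
    have \<rho>X: "\<rho> ` X \<subseteq> carrier (BijGroup \<Omega>)" using \<rho>B by (auto simp: BijGroup_carrier)
    have small: "\<forall>r \<in> E. dOm \<Omega> (eval_word (BijGroup \<Omega>) \<rho> r) \<one>\<^bsub>BijGroup \<Omega>\<^esub> < \<delta>"
    proof
      fix r assume r: "r \<in> E"
      then have rk: "r \<in> words_on X" "eval_word G s r = \<one>\<^bsub>G\<^esub>" using Ek by (auto simp: kerpi_def free_elems_def)
      have "length r \<le> norm_rel E" unfolding norm_rel_def by (rule member_le_sum[OF r _ finE]) simp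
      then have lr: "real (length r) < real t * \<delta>" using normE by linarith
      moreover have "real t * \<delta> \<le> real t" using dpos tpos by (simp add: mult_left_le)
      ultimately have "real (length r) < real t" by linarith
      then have lrt: "length r \<le> t" by simp
      have "dOm \<Omega> (eval_word (BijGroup \<Omega>) \<rho> r) (\<phi> (eval_word G s r)) \<le> real (length r) / real t"
        unfolding \<rho>_def by (rule chain_almost[OF G sX t1 ar rk(1) lrt])
      also have "\<dots> < \<delta>" using lr tpos by (simp add: divide_less_eq mult.commute)
      finally show "dOm \<Omega> (eval_word (BijGroup \<Omega>) \<rho> r) \<one>\<^bsub>BijGroup \<Omega>\<^esub> < \<delta>" using rk(2) \<phi>1 by simp
    qed
    obtain \<psi> where \<psi>: "\<psi> \<in> hom G (BijGroup \<Omega>)" and cl: "\<forall>x \<in> X. dOm \<Omega> (\<rho> x) (\<psi> (s x)) < 1 / (10 * real l)"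
      using valid[rule_format, OF fin\<Omega> \<rho>X small[rule_format]] by blast
    have gh: "group_hom G (BijGroup \<Omega>) \<psi>"
      using \<psi> G group_BijGroup by (simp add: group_hom_def group_hom_axioms_def)
    interpret BG: group "BijGroup \<Omega>" by (rule group_BijGroup)
    have \<psi>sB: "\<psi> (s x) \<in> Bij \<Omega>" if "x \<in> X" for x
      using hom_in_carrier[OF \<psi>] sX that by (auto simp: BijGroup_carrier)
    have inj\<psi>: "inj_on \<psi> (ballS G X s l)"
    proof (rule inj_onI, rule ccontr)
      fix g h assume g: "g \<in> ballS G X s l" and h: "h \<in> ballS G X s l" and e: "\<psi> g = \<psi> h" and ne: "g \<noteq> h"
      obtain u where u: "u \<in> words_on X" "length u \<le> l" "g = eval_word G s u" using g by (auto simp: ballS_def)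
      obtain v where v: "v \<in> words_on X" "length v \<le> l" "h = eval_word G s v" using h by (auto simp: ballS_def)
      have gc: "g \<in> carrier G" "h \<in> carrier G" using u v eval_word_closed[OF G sX] by auto
      define w' where "w' = invw u @ v"
      have w'X: "w' \<in> words_on X" using u v invw_words by (simp add: w'_def)
      have lw': "length w' \<le> 2 * l" using u v by (simp add: w'_def)
      have ew': "eval_word G s w' = inv\<^bsub>G\<^esub> g \<otimes>\<^bsub>G\<^esub> h"
        using eval_word_append[OF G sX invw_words[OF u(1)] v(1)] eval_invw[OF G sX u(1)] u(3) v(3)
        by (simp add: w'_def)
      have ne1: "eval_word G s w' \<noteq> \<one>\<^bsub>G\<^esub>"
      proof
        assume "eval_word G s w' = \<one>\<^bsub>G\<^esub>"
        then have "inv\<^bsub>G\<^esub> g \<otimes>\<^bsub>G\<^esub> h = \<one>\<^bsub>G\<^esub>" using ew' by simp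
        then have "h = g" using gc G.inv_comm G.inv_equality by (metis G.inv_inv G.inv_closed)
        then show False using ne by simp
      qed
      have \<psi>w': "\<psi> (eval_word G s w') = \<one>\<^bsub>BijGroup \<Omega>\<^esub>"
        using ew' gc e by (simp add: hom_mult[OF \<psi>] group_hom.hom_inv[OF gh] hom_in_carrier[OF \<psi>])
      have tl: "2 * l \<le> t" using t10 by simp
      have w'B: "eval_word G s w' \<in> ?B" by (rule in_ballS[OF w'X]) (use lw' tl in simp)
      have d1: "dOm \<Omega> (eval_word (BijGroup \<Omega>) \<rho> w') (eval_word (BijGroup \<Omega>) (\<psi> \<circ> s) w') \<le> real (length w') * (1 / (10 * real l))"
        by (rule chain_hom[OF fin\<Omega> \<rho>B _ _ w'X]) (use \<psi>sB cl in \<open>auto intro: less_imp_le\<close>)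
      have "eval_word (BijGroup \<Omega>) (\<psi> \<circ> s) w' = \<one>\<^bsub>BijGroup \<Omega>\<^esub>"
        using eval_word_hom[OF G group_BijGroup \<psi> sX w'X] \<psi>w' by simp
      moreover have "real (length w') * (1 / (10 * real l)) \<le> 1 / 5"
        using lw' l1 by (simp add: field_simps)
      ultimately have d1': "dOm \<Omega> (eval_word (BijGroup \<Omega>) \<rho> w') \<one>\<^bsub>BijGroup \<Omega>\<^esub> \<le> 1 / 5" using d1 by simp
      have d2: "dOm \<Omega> (eval_word (BijGroup \<Omega>) \<rho> w') (\<phi> (eval_word G s w')) \<le> real (length w') / real t"
        unfolding \<rho>_def by (rule chain_almost[OF G sX t1 ar w'X]) (use lw' tl in simp)
      have "dOm \<Omega> (\<phi> (eval_word G s w')) \<one>\<^bsub>BijGroup \<Omega>\<^esub> \<le>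
          dOm \<Omega> (\<phi> (eval_word G s w')) (eval_word (BijGroup \<Omega>) \<rho> w') + dOm \<Omega> (eval_word (BijGroup \<Omega>) \<rho> w') \<one>\<^bsub>BijGroup \<Omega>\<^esub>"
        by (rule dOm_triangle[OF fin\<Omega>])
      also have "\<dots> \<le> real (length w') / real t + 1 / 5" using d1' d2 by (simp add: dOm_sym)
      also have "\<dots> \<le> 2 * real l / real t + 1 / 5" using lw' tpos by (simp add: divide_right_mono)
      finally have A: "1 - 1 / real t < 2 * real l / real t + 1 / 5" using \<phi>far[OF w'B ne1] by linarith
      then have m: "(1 - 1 / real t) * real t < (2 * real l / real t + 1 / 5) * real t"
        using tpos by (rule mult_strict_right_mono)
      have e1: "(1 - 1 / real t) * real t = real t - 1" using tpos by (simp add: algebra_simps)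
      have e2: "(2 * real l / real t + 1 / 5) * real t = 2 * real l + real t / 5" using tpos by (simp add: algebra_simps)
      have "real t - 1 < 2 * real l + real t / 5" using m e1 e2 by simp
      moreover have "10 * real l \<le> real t" using t10 by linarith
      ultimately show False using l1 by linarith
    qed
    have finB: "finite (carrier (BijGroup \<Omega>))" and cardB: "card (carrier (BijGroup \<Omega>)) \<le> fact (card \<Omega>)"
      using card_Bij_le[OF fin\<Omega>] by (simp_all add: BijGroup_carrier)
    obtain \<Delta> :: "nat monoid" and e where \<Delta>: "group \<Delta>" "finite (carrier \<Delta>)"
      "card (carrier \<Delta>) = card (carrier (BijGroup \<Omega>))" "e \<in> hom (BijGroup \<Omega>) \<Delta>" "inj_on e (carrier (BijGroup \<Omega>))"
      using transport_group[OF group_BijGroup finB] by blast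
    have hh: "e \<circ> \<psi> \<in> hom G \<Delta>" by (rule hom_compose[OF \<psi> \<Delta>(4)])
    have ih: "inj_on (e \<circ> \<psi>) (ballS G X s l)"
    proof (rule inj_onI)
      fix g h assume g: "g \<in> ballS G X s l" and h: "h \<in> ballS G X s l" and eq: "(e \<circ> \<psi>) g = (e \<circ> \<psi>) h"
      have "g \<in> carrier G" "h \<in> carrier G" using g h ballS_carrier[OF G sX] by auto
      then have "\<psi> g \<in> carrier (BijGroup \<Omega>)" "\<psi> h \<in> carrier (BijGroup \<Omega>)" using hom_in_carrier[OF \<psi>] by auto
      then have "\<psi> g = \<psi> h" using \<Delta>(5) eq by (simp add: inj_on_def)
      then show "g = h" using inj\<psi> g h by (simp add: inj_on_def)
    qed
    have mem: "enat (card (carrier \<Delta>)) \<in> {enat (card (carrier \<Delta>)) | \<Delta> :: nat monoid.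
       group \<Delta> \<and> finite (carrier \<Delta>) \<and> (\<exists>h \<in> hom G \<Delta>. inj_on h (ballS G X s l))}"
      using \<Delta>(1,2) hh ih by blast
    have "rf_profile G X s l \<le> enat (card (carrier \<Delta>))"
      unfolding rf_profile_def using mem by (rule Inf_lower)
    also have "\<dots> \<le> enat (fact (card \<Omega>))" using \<Delta>(3) cardB by simp
    finally show "rf_profile G X s l \<le> enat (fact (sofic_profile_real G X s (2 * stab_fun G X s (10 * real l))))"
      using Dt by simp
  qed
qed

end
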